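(* Let $t$ be a record with versions $t'_1,\dots,t'_I$ and let $G'$ be its feasible sub-SUG, with layers $V'_1,\dots,V'_I$. This holds regardless of how the releases were generalized. For every $1\le i\le I$, the disclosure risk of $t'_i$ equals $1$ if and only if $|V'_i|=1$.
   Context: Data model. A microdata table is published repeatedly. Its records carry an identifier, quasi-identifier (QI) attributes and a sensitive attribute $S$ with a finite domain $\mathrm{dom}(S)$. Each published (generalized) table partitions its records, possibly including counterfeit records, into QI-groups. If a record $t$ appears in a release, its candidate sensitive set in that release is the set of sensitive values occurring in its QI-group; this set contains $t$'s actual sensitive value. The versions of $t$ are its records in the successive releases in which it appears, listed in order: $t'_1,\dots,t'_I$, with candidate sensitive sets $C_1,\dots,C_I$. Internal updates are governed by a publicly known transition probability $P_{trans}(a,b)\ge 0$ for $a,b\in\mathrm{dom}(S)$. Actual updates are feasible: $P_{trans}(t'_i[S],t'_{i+1}[S])>0$ for every $i$. Sensitive attribute update graph (SUG). The SUG of $t$ has, for each $i=1,\dots,I$, a layer $V_i=\{v_{i,s}: s\in C_i\}$ with one node per value of $C_i$. Each node has a weight $w(v_{i,s})>0$, its linking probability, and the weights in each layer sum to $1$; under the random-world assumption $w(v_{i,s})=1/|C_i|$. There is a directed edge $(v_{i,s},v_{i+1,s'})$ exactly when $P_{trans}(s,s')>0$, and its weight is $P_{trans}(s,s')$. Feasible sub-SUG. Obtain it from the SUG by repeatedly deleting a node, together with its incident edges, until no node can be deleted. A node is deleted if any of the following holds: it lies in $V_1$ and has no outgoing edge; it lies in $V_I$ and has no incoming edge; it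 lies in $V_i$ with $1<i<I$ and lacks an incoming edge or lacks an outgoing edge. When $I=1$, no node is deleted. Denote the remaining layers by $V'_i$. Disclosure risk. A feasible path is a path $p=(v'_{1,x_1},\dots,v'_{I,x_I})$ through the feasible sub-SUG with one node in each layer, where consecutive nodes are joined by edges. Its weight is $w(p)=w(v'_{I,x_I})\prod_{i=1}^{I-1} w(v'_{i,x_i})\,w(v'_{i,x_i},v'_{i+1,x_{i+1}})$. The disclosure risk of version $t'_i$ is the total weight of the feasible paths passing through the node of $V'_i$ that represents $t'_i[S]$, divided by the total weight of all feasible paths. *)

theory Defs
  imports Complex_Main
begin

(* Layers are indexed 1..I.  A node of the SUG is a pair (i, s) with s \<in> C i.
   'v is the (finite) domain dom(S) of the sensitive attribute. *)

definition sug_nodes :: "nat \<Rightarrow> (nat \<Rightarrow> 'v set) \<Rightarrow> (nat \<times> 'v) set" where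
  "sug_nodes I C = {(i, s). 1 \<le> i \<and> i \<le> I \<and> s \<in> C i}"

definition has_out :: "('v \<Rightarrow> 'v \<Rightarrow> real) \<Rightarrow> (nat \<times> 'v) set \<Rightarrow> nat \<Rightarrow> 'v \<Rightarrow> bool" where
  "has_out P N i s = (\<exists>s'. (Suc i, s') \<in> N \<and> P s s' > 0)"

definition has_in :: "('v \<Rightarrow> 'v \<Rightarrow> real) \<Rightarrow> (nat \<times> 'v) set \<Rightarrow> nat \<Rightarrow> 'v \<Rightarrow> bool" where
  "has_in P N i s = (\<exists>s'. 1 \<le> i - 1 \<and> (i - 1, s') \<in> N \<and> P s' s > 0)"

definition deletable :: "nat \<Rightarrow> ('v \<Rightarrow> 'v \<Rightarrow> real) \<Rightarrow> (nat \<times> 'v) set \<Rightarrow> nat \<times> 'v \<Rightarrow> bool" where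
  "deletable I P N v = (case v of (i, s) \<Rightarrow>
     v \<in> N \<and> 1 < I \<and>
     ((i = 1 \<and> \<not> has_out P N i s) \<or>
      (i = I \<and> \<not> has_in P N i s) \<or>
      (1 < i \<and> i < I \<and> (\<not> has_in P N i s \<or> \<not> has_out P N i s))))"

definition del_step :: "nat \<Rightarrow> ('v \<Rightarrow> 'v \<Rightarrow> real) \<Rightarrow> (nat \<times> 'v) set \<Rightarrow> (nat \<times> 'v) set \<Rightarrow> bool" where
  "del_step I P N N' = (\<exists>v. deletable I P N v \<and> N' = N - {v})"

definition is_feasible_subSUG :: "nat \<Rightarrow> (nat \<Rightarrow> 'v set) \<Rightarrow> ('v \<Rightarrow> 'v \<Rightarrow> real) \<Rightarrow> (nat \<times> 'v) set \<Rightarrow> bool" where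
  "is_feasible_subSUG I C P N =
     ((del_step I P)\<^sup>*\<^sup>* (sug_nodes I C) N \<and> \<not> (\<exists>v. deletable I P N v))"

definition layer :: "(nat \<times> 'v) set \<Rightarrow> nat \<Rightarrow> 'v set" where
  "layer N i = {s. (i, s) \<in> N}"

(* feasible paths: lists xs of length I, xs ! (i-1) is the value chosen in layer i *)
definition feasible_paths :: "nat \<Rightarrow> ('v \<Rightarrow> 'v \<Rightarrow> real) \<Rightarrow> (nat \<times> 'v) set \<Rightarrow> 'v list set" where
  "feasible_paths I P N = {xs. length xs = I \<and>
      (\<forall>i\<in>{1..I}. (i, xs ! (i - 1)) \<in> N) \<and>
      (\<forall>i\<in>{1..<I}. P (xs ! (i - 1)) (xs ! i) > 0)}"

definition path_weight :: "nat \<Rightarrow> (nat \<Rightarrow> 'v \<Rightarrow> real) \<Rightarrow> ('v \<Rightarrow> 'v \<Rightarrow> real) \<Rightarrow> 'v list \<Rightarrow> real" where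
  "path_weight I w P xs = w I (xs ! (I - 1)) *
      (\<Prod>i\<in>{1..<I}. w i (xs ! (i - 1)) * P (xs ! (i - 1)) (xs ! i))"

definition disclosure_risk :: "nat \<Rightarrow> (nat \<Rightarrow> 'v \<Rightarrow> real) \<Rightarrow> ('v \<Rightarrow> 'v \<Rightarrow> real) \<Rightarrow> (nat \<times> 'v) set \<Rightarrow> nat \<Rightarrow> 'v \<Rightarrow> real" where
  "disclosure_risk I w P N i a =
     (\<Sum>xs\<in>{xs \<in> feasible_paths I P N. xs ! (i - 1) = a}. path_weight I w P xs)
     / (\<Sum>xs\<in>feasible_paths I P N. path_weight I w P xs)"

end

theory Submission
  imports Defs
begin

lemma inv_step:
  assumes P0: "\<And>j. 1 \<le> j \<Longrightarrow> j < I \<Longrightarrow> P (act j) (act (Suc j)) > 0"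
    and sub: "N \<subseteq> sug_nodes I C" and acts: "\<forall>j\<in>{1..I}. (j, act j) \<in> N"
    and d: "deletable I P N v"
  shows "\<forall>j\<in>{1..I}. v \<noteq> (j, act j)"
proof
  fix j assume j: "j \<in> {1..I}"
  show "v \<noteq> (j, act j)"
  proof
    assume v: "v = (j, act j)"
    have I1: "1 < I" using d by (simp add: deletable_def split: prod.splits)
    have ho: "has_out P N j (act j)" if "j < I"
      unfolding has_out_def using that j acts P0[of j] by (intro exI[of _ "act (Suc j)"]) auto
    have hi: "has_in P N j (act j)" if "1 < j"
    proof -
      have "1 \<le> j - 1" "j - 1 \<le> I" using j that by auto
      then have "(j-1, act (j-1)) \<in> N" using bspec[OF acts, of "j-1"] by auto
      moreover have "P (act (j-1)) (act j) > 0" using P0[of "j-1"] that j by auto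
      ultimately show ?thesis unfolding has_in_def using that by (intro exI[of _ "act (j-1)"]) auto
    qed
    show False using d v ho hi I1 j by (auto simp: deletable_def)
  qed
qed

lemma invariant:
  assumes "(del_step I P)\<^sup>*\<^sup>* (sug_nodes I C) N"
    and P0: "\<And>j. 1 \<le> j \<Longrightarrow> j < I \<Longrightarrow> P (act j) (act (Suc j)) > 0"
    and actC: "\<And>j. 1 \<le> j \<Longrightarrow> j \<le> I \<Longrightarrow> act j \<in> C j"
  shows "N \<subseteq> sug_nodes I C \<and> (\<forall>j\<in>{1..I}. (j, act j) \<in> N)"
  using assms(1)
proof (induction rule: rtranclp_induct)
  case base
  then show ?case using actC by (auto simp: sug_nodes_def)
next
  case (step y z)
  then obtain v where d: "deletable I P y v" and z: "z = y - {v}" by (auto simp: del_step_def)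
  have "\<forall>j\<in>{1..I}. v \<noteq> (j, act j)"
    by (rule inv_step[where v=v and act=act]) (use P0 step d in auto)
  then show ?case using step z by blast
qed

lemma forward:
  assumes nd: "\<not> (\<exists>v. deletable I P N v)" and sN: "(i, s) \<in> N" and i1: "1 \<le> i"
  shows "i + n \<le> I \<Longrightarrow> \<exists>f. f i = s \<and> (\<forall>j. i \<le> j \<and> j \<le> i + n \<longrightarrow> (j, f j) \<in> N)
     \<and> (\<forall>j. i \<le> j \<and> j < i + n \<longrightarrow> P (f j) (f (Suc j)) > 0)"
proof (induction n)
  case 0
  then show ?case using sN by (intro exI[of _ "\<lambda>_. s"]) auto
next
  case (Suc n)
  then obtain f where f: "f i = s" "\<forall>j. i \<le> j \<and> j \<le> i + n \<longrightarrow> (j, f j) \<in> N"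
     "\<forall>j. i \<le> j \<and> j < i + n \<longrightarrow> P (f j) (f (Suc j)) > 0" by auto
  let ?k = "i + n"
  have kN: "(?k, f ?k) \<in> N" using f by auto
  have "has_out P N ?k (f ?k)"
    using nd kN Suc.prems i1 unfolding deletable_def by (cases "?k = 1") auto
  then obtain s' where s': "(Suc ?k, s') \<in> N" "P (f ?k) s' > 0" by (auto simp: has_out_def)
  define g where "g = f(Suc ?k := s')"
  have "g i = s" using f by (simp add: g_def)
  moreover have "\<forall>j. i \<le> j \<and> j \<le> i + Suc n \<longrightarrow> (j, g j) \<in> N"
    using f s' by (auto simp: g_def le_Suc_eq)
  moreover have "\<forall>j. i \<le> j \<and> j < i + Suc n \<longrightarrow> P (g j) (g (Suc j)) > 0"
  proof (intro allI impI)
    fix j assume j: "i \<le> j \<and> j < i + Suc n"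
    show "P (g j) (g (Suc j)) > 0"
    proof (cases "j = ?k")
      case True then show ?thesis using s' by (simp add: g_def)
    next
      case False then show ?thesis using f j by (simp add: g_def)
    qed
  qed
  ultimately show ?case by blast
qed

lemma backward:
  assumes nd: "\<not> (\<exists>v. deletable I P N v)" and sN: "(i, s) \<in> N" and iI: "i \<le> I"
  shows "n < i \<Longrightarrow> \<exists>f. f i = s \<and> (\<forall>j. i - n \<le> j \<and> j \<le> i \<longrightarrow> (j, f j) \<in> N)
     \<and> (\<forall>j. i - n \<le> j \<and> j < i \<longrightarrow> P (f j) (f (Suc j)) > 0)"
proof (induction n)
  case 0
  then show ?case using sN by (intro exI[of _ "\<lambda>_. s"]) auto
next
  case (Suc n)
  then obtain f where f: "f i = s" "\<forall>j. i - n \<le> j \<and> j \<le> i \<longrightarrow> (j, f j) \<in> N"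
     "\<forall>j. i - n \<le> j \<and> j < i \<longrightarrow> P (f j) (f (Suc j)) > 0" by auto
  let ?k = "i - n"
  have kN: "(?k, f ?k) \<in> N" using f by auto
  have k1: "1 < ?k" "?k \<le> I" using Suc.prems iI by auto
  have "has_in P N ?k (f ?k)"
    using nd kN k1 unfolding deletable_def by (cases "?k = I") auto
  then obtain s' where s': "(?k - 1, s') \<in> N" "P s' (f ?k) > 0" by (auto simp: has_in_def)
  define g where "g = f(?k - 1 := s')"
  have eq: "i - Suc n = ?k - 1" by simp
  have ne: "i - Suc n \<noteq> i" using k1 by simp
  have "g i = s" using f k1 ne by (simp add: g_def)
  moreover have "\<forall>j. i - Suc n \<le> j \<and> j \<le> i \<longrightarrow> (j, g j) \<in> N"
  proof (intro allI impI)
    fix j assume j: "i - Suc n \<le> j \<and> j \<le> i"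
    show "(j, g j) \<in> N"
    proof (cases "j = ?k - 1")
      case True then show ?thesis using s' by (simp add: g_def)
    next
      case False
      then have "i - n \<le> j" using j by arith
      then show ?thesis using f j k1 False by (simp add: g_def)
    qed
  qed
  moreover have "\<forall>j. i - Suc n \<le> j \<and> j < i \<longrightarrow> P (g j) (g (Suc j)) > 0"
  proof (intro allI impI)
    fix j assume j: "i - Suc n \<le> j \<and> j < i"
    show "P (g j) (g (Suc j)) > 0"
    proof (cases "j = ?k - 1")
      case True
      then have "Suc j = ?k" using k1 by simp
      then show ?thesis using s' True k1 by (simp add: g_def)
    next
      case False
      then have "i - n \<le> j" using j by arith
      then show ?thesis using f j k1 False by (simp add: g_def)
    qed
  qed
  ultimately show ?case by blast
qed

lemma through:
  assumes nd: "\<not> (\<exists>v. deletable I P N v)" and sN: "(i, s) \<in> N" and i1: "1 \<le> i" and iI: "i \<le> I"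
  shows "\<exists>xs \<in> feasible_paths I P N. xs ! (i - 1) = s"
proof -
  obtain f where f: "f i = s" "\<forall>j. i \<le> j \<and> j \<le> I \<longrightarrow> (j, f j) \<in> N"
     "\<forall>j. i \<le> j \<and> j < I \<longrightarrow> P (f j) (f (Suc j)) > 0"
    using forward[OF nd sN i1, of "I - i"] iI by auto
  obtain g where g: "g i = s" "\<forall>j. 1 \<le> j \<and> j \<le> i \<longrightarrow> (j, g j) \<in> N"
     "\<forall>j. 1 \<le> j \<and> j < i \<longrightarrow> P (g j) (g (Suc j)) > 0"
    using backward[OF nd sN iI, of "i - 1"] i1 by auto
  define h where "h j = (if j < i then g j else f j)" for j
  have hN: "(j, h j) \<in> N" if "1 \<le> j" "j \<le> I" for j
    using f g that by (auto simp: h_def)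
  have hP: "P (h j) (h (Suc j)) > 0" if "1 \<le> j" "j < I" for j
  proof (cases "Suc j < i")
    case True then show ?thesis using g that by (simp add: h_def)
  next
    case False
    show ?thesis
    proof (cases "j < i")
      case True
      then have si: "Suc j = i" using False by simp
      have "P (g j) (g (Suc j)) > 0" using g True that by auto
      then show ?thesis using si g f True by (simp add: h_def)
    next
      case False2: False
      then show ?thesis using f False that by (simp add: h_def)
    qed
  qed
  define xs where "xs = map (\<lambda>k. h (Suc k)) [0..<I]"
  have nth: "xs ! (j - 1) = h j" if "1 \<le> j" "j \<le> I" for j
  proof -
    have "j - 1 < I" using that by arith
    then show ?thesis using that by (simp add: xs_def)
  qed
  have nth2: "xs ! j = h (Suc j)" if "j < I" for j
    using that by (simp add: xs_def)
  have "xs \<in> feasible_paths I P N"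
    unfolding feasible_paths_def
  proof (intro CollectI conjI ballI)
    show "length xs = I" by (simp add: xs_def)
  next
    fix j assume "j \<in> {1..I}"
    then show "(j, xs ! (j - 1)) \<in> N" using nth hN by auto
  next
    fix j assume j: "j \<in> {1..<I}"
    then have "xs ! j = h (Suc j)" using nth2 by auto
    then show "P (xs ! (j - 1)) (xs ! j) > 0" using nth hP j by auto
  qed
  moreover have "xs ! (i - 1) = s" using nth i1 iI f by (simp add: h_def)
  ultimately show ?thesis by blast
qed

theorem lemma2:
  fixes I :: nat
    and C :: "nat \<Rightarrow> 'v::finite set"
    and act :: "nat \<Rightarrow> 'v"
    and P :: "'v \<Rightarrow> 'v \<Rightarrow> real"
    and w :: "nat \<Rightarrow> 'v \<Rightarrow> real"
    and N :: "(nat \<times> 'v) set"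
    and i :: nat
  assumes "1 \<le> I"
    and "\<And>j. 1 \<le> j \<Longrightarrow> j \<le> I \<Longrightarrow> act j \<in> C j"
    and "\<And>a b. P a b \<ge> 0"
    and "\<And>j. 1 \<le> j \<Longrightarrow> j < I \<Longrightarrow> P (act j) (act (Suc j)) > 0"
    and "\<And>j s. 1 \<le> j \<Longrightarrow> j \<le> I \<Longrightarrow> s \<in> C j \<Longrightarrow> w j s > 0"
    and "\<And>j. 1 \<le> j \<Longrightarrow> j \<le> I \<Longrightarrow> (\<Sum>s\<in>C j. w j s) = 1"
    and "is_feasible_subSUG I C P N"
    and "1 \<le> i" and "i \<le> I"
  shows "disclosure_risk I w P N i (act i) = 1 \<longleftrightarrow> card (layer N i) = 1"
proof -
  note A = assms
  have rt: "(del_step I P)\<^sup>*\<^sup>* (sug_nodes I C) N" and nd: "\<not> (\<exists>v. deletable I P N v)"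
    using A(7) by (auto simp: is_feasible_subSUG_def)
  have inv: "N \<subseteq> sug_nodes I C" "\<forall>j\<in>{1..I}. (j, act j) \<in> N"
    using invariant[OF rt A(4) A(2)] by auto
  let ?FP = "feasible_paths I P N"
  have fin: "finite ?FP"
  proof -
    have "?FP \<subseteq> {xs. set xs \<subseteq> UNIV \<and> length xs = I}" by (auto simp: feasible_paths_def)
    moreover have "finite {xs::'v list. set xs \<subseteq> UNIV \<and> length xs = I}"
      by (rule finite_lists_length_eq) simp
    ultimately show ?thesis by (rule finite_subset)
  qed
  have pos: "path_weight I w P xs > 0" if xs: "xs \<in> ?FP" for xs
  proof -
    have inC: "xs ! (j - 1) \<in> C j" if "1 \<le> j" "j \<le> I" for j
      using xs that inv(1) by (auto simp: feasible_paths_def sug_nodes_def)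
    have Pp: "P (xs ! (j - 1)) (xs ! j) > 0" if "j \<in> {1..<I}" for j
      using xs that by (auto simp: feasible_paths_def)
    have "w I (xs ! (I - 1)) > 0" using A(5) inC A(1) by auto
    moreover have "(\<Prod>j\<in>{1..<I}. w j (xs ! (j - 1)) * P (xs ! (j - 1)) (xs ! j)) > 0"
      by (rule prod_pos) (use A(5) inC Pp in \<open>auto intro!: mult_pos_pos\<close>)
    ultimately show ?thesis unfolding path_weight_def by simp
  qed
  have actI: "act i \<in> layer N i" using inv(2) A(8,9) by (auto simp: layer_def)
  obtain ap where ap: "ap \<in> ?FP" "ap ! (i - 1) = act i"
    using through[OF nd _ A(8,9), of "act i"] inv(2) A(8,9) by auto
  let ?S = "{xs \<in> ?FP. xs ! (i - 1) = act i}"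
  let ?T = "{xs \<in> ?FP. xs ! (i - 1) \<noteq> act i}"
  have split: "(\<Sum>xs\<in>?FP. path_weight I w P xs) = (\<Sum>xs\<in>?S. path_weight I w P xs) + (\<Sum>xs\<in>?T. path_weight I w P xs)"
  proof -
    have "?FP = ?S \<union> ?T" by blast
    moreover have "?S \<inter> ?T = {}" by blast
    ultimately show ?thesis using fin by (metis (no_types, lifting) finite_Un sum.union_disjoint)
  qed
  have Spos: "(\<Sum>xs\<in>?S. path_weight I w P xs) > 0"
    by (rule sum_pos2[of _ ap]) (use fin ap pos in \<open>auto intro: less_imp_le\<close>)
  have Tnn: "(\<Sum>xs\<in>?T. path_weight I w P xs) \<ge> 0"
    by (rule sum_nonneg) (use pos in \<open>auto intro: less_imp_le\<close>)
  have "disclosure_risk I w P N i (act i) = 1 \<longleftrightarrow> (\<Sum>xs\<in>?T. path_weight I w P xs) = 0"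
    unfolding disclosure_risk_def split using Spos Tnn by (auto simp: divide_eq_1_iff)
  also have "\<dots> \<longleftrightarrow> ?T = {}"
  proof
    assume z: "(\<Sum>xs\<in>?T. path_weight I w P xs) = 0"
    show "?T = {}"
    proof (rule ccontr)
      assume "?T \<noteq> {}"
      then obtain x where "x \<in> ?T" by blast
      then have "(\<Sum>xs\<in>?T. path_weight I w P xs) > 0"
        by (intro sum_pos2[of _ x]) (use fin pos in \<open>auto intro: less_imp_le\<close>)
      then show False using z by simp
    qed
  next
    assume h: "?T = {}"
    show "(\<Sum>xs\<in>?T. path_weight I w P xs) = 0" unfolding h by simp
  qed
  also have "\<dots> \<longleftrightarrow> layer N i = {act i}"
  proof
    assume T: "?T = {}"
    show "layer N i = {act i}"
    proof
      show "layer N i \<subseteq> {act i}"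
      proof
        fix s assume "s \<in> layer N i"
        then have "(i, s) \<in> N" by (simp add: layer_def)
        then obtain xs where "xs \<in> ?FP" "xs ! (i - 1) = s" using through[OF nd _ A(8,9)] by blast
        then show "s \<in> {act i}" using T by auto
      qed
    qed (use actI in auto)
  next
    assume L: "layer N i = {act i}"
    show "?T = {}"
    proof (rule ccontr)
      assume "?T \<noteq> {}"
      then obtain xs where xs: "xs \<in> ?FP" "xs ! (i - 1) \<noteq> act i" by blast
      then have "(i, xs ! (i - 1)) \<in> N" using A(8,9) by (auto simp: feasible_paths_def)
      then show False using L xs by (auto simp: layer_def)
    qed
  qed
  also have "\<dots> \<longleftrightarrow> card (layer N i) = 1"
    using actI by (auto simp: card_1_singleton_iff)
  finally show ?thesis .
qed

end
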